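(* Let $M$ be a timelike surface in $\mathbb{R}^{n,1}$ with a canonical null direction with respect to some constant vector $Z$. If the mean curvature vector $\vec H$ of $M$ is parallel in the normal bundle ($\nabla^\perp\vec H=0$), then $M$ is minimal, i.e. $\vec H=0$.
   Context: $\mathbb{R}^{n,1}$ is $\mathbb{R}^{n+1}$ with the metric $-dx_1^2+dx_2^2+\dots+dx_{n+1}^2$. A surface is timelike if the induced metric has signature $(1,1)$; a vector $v$ is lightlike if $v\ne0$ and $\langle v,v\rangle=0$. For a constant vector $Z$, $Z=Z^\top+Z^\perp$ along $M$ (tangent and normal parts); $M$ has a canonical null direction with respect to $Z$ if $Z^\top$ is lightlike everywhere on $M$. $\vec H=\frac12\operatorname{tr}II$ is the mean curvature vector and $\nabla^\perp$ the normal connection. *)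

theory Defs
  imports "HOL-Analysis.Analysis"
begin

text \<open>Minkowski space R^{n,1} is modelled as real \<times> (real^'n): the first component is the
  time coordinate x_1, the second the spatial coordinates x_2..x_{n+1}.\<close>

definition lor :: "real \<times> (real^'n) \<Rightarrow> real \<times> (real^'n) \<Rightarrow> real" where
  "lor a b = - fst a * fst b + snd a \<bullet> snd b"

definition lightlike :: "real \<times> (real^'n) \<Rightarrow> bool" where
  "lightlike v \<longleftrightarrow> v \<noteq> 0 \<and> lor v v = 0"

definition pu :: "(real \<times> real \<Rightarrow> 'a::real_normed_vector) \<Rightarrow> real \<times> real \<Rightarrow> 'a" where
  "pu f p = frechet_derivative f (at p) (1, 0)"

definition pv :: "(real \<times> real \<Rightarrow> 'a::real_normed_vector) \<Rightarrow> real \<times> real \<Rightarrow> 'a" where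
  "pv f p = frechet_derivative f (at p) (0, 1)"

fun Ck :: "nat \<Rightarrow> (real \<times> real \<Rightarrow> 'a::real_normed_vector) \<Rightarrow> (real \<times> real) set \<Rightarrow> bool" where
  "Ck 0 f U = continuous_on U f"
| "Ck (Suc k) f U = (continuous_on U f \<and> f differentiable_on U \<and> Ck k (pu f) U \<and> Ck k (pv f) U)"

definition smooth_on :: "(real \<times> real \<Rightarrow> 'a::real_normed_vector) \<Rightarrow> (real \<times> real) set \<Rightarrow> bool" where
  "smooth_on f U \<longleftrightarrow> (\<forall>k. Ck k f U)"

definition gE :: "(real \<times> real \<Rightarrow> real \<times> (real^'n)) \<Rightarrow> real \<times> real \<Rightarrow> real" where
  "gE X p = lor (pu X p) (pu X p)"
definition gF :: "(real \<times> real \<Rightarrow> real \<times> (real^'n)) \<Rightarrow> real \<times> real \<Rightarrow> real" where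
  "gF X p = lor (pu X p) (pv X p)"
definition gG :: "(real \<times> real \<Rightarrow> real \<times> (real^'n)) \<Rightarrow> real \<times> real \<Rightarrow> real" where
  "gG X p = lor (pv X p) (pv X p)"

definition gdet :: "(real \<times> real \<Rightarrow> real \<times> (real^'n)) \<Rightarrow> real \<times> real \<Rightarrow> real" where
  "gdet X p = gE X p * gG X p - (gF X p)\<^sup>2"

text \<open>The induced metric on a 2-dimensional tangent plane has signature (1,1)
  iff its Gram determinant EG - F^2 is negative.\<close>

definition timelike_surface :: "(real \<times> real \<Rightarrow> real \<times> (real^'n)) \<Rightarrow> (real \<times> real) set \<Rightarrow> bool" where
  "timelike_surface X U \<longleftrightarrow> open U \<and> U \<noteq> {} \<and> smooth_on X U \<and> (\<forall>p\<in>U. gdet X p < 0)"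

text \<open>Tangent part v^T = g^{ij} <v,X_i> X_j, normal part v^perp = v - v^T.\<close>

definition tang :: "(real \<times> real \<Rightarrow> real \<times> (real^'n)) \<Rightarrow> real \<times> real \<Rightarrow> real \<times> (real^'n) \<Rightarrow> real \<times> (real^'n)" where
  "tang X p w =
     (let D = gdet X p; a = lor w (pu X p); b = lor w (pv X p);
          g11 = gG X p / D; g12 = - gF X p / D; g22 = gE X p / D
      in (g11 * a + g12 * b) *\<^sub>R pu X p + (g12 * a + g22 * b) *\<^sub>R pv X p)"

definition norm_part :: "(real \<times> real \<Rightarrow> real \<times> (real^'n)) \<Rightarrow> real \<times> real \<Rightarrow> real \<times> (real^'n) \<Rightarrow> real \<times> (real^'n)" where
  "norm_part X p w = w - tang X p w"

text \<open>Mean curvature vector H = (1/2) tr II = (1/2) g^{ij} (X_ij)^perp.\<close>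

definition meanH :: "(real \<times> real \<Rightarrow> real \<times> (real^'n)) \<Rightarrow> real \<times> real \<Rightarrow> real \<times> (real^'n)" where
  "meanH X p =
     (let D = gdet X p; g11 = gG X p / D; g12 = - gF X p / D; g22 = gE X p / D
      in (1/2) *\<^sub>R (g11 *\<^sub>R norm_part X p (pu (pu X) p)
                   + g12 *\<^sub>R norm_part X p (pv (pu X) p)
                   + g12 *\<^sub>R norm_part X p (pu (pv X) p)
                   + g22 *\<^sub>R norm_part X p (pv (pv X) p)))"

text \<open>Normal covariant derivative: nabla^perp_{d_i} H = (d_i H)^perp.\<close>

definition parallel_mean_curvature :: "(real \<times> real \<Rightarrow> real \<times> (real^'n)) \<Rightarrow> (real \<times> real) set \<Rightarrow> bool" where
  "parallel_mean_curvature X U \<longleftrightarrow>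
     (\<forall>p\<in>U. norm_part X p (pu (meanH X) p) = 0 \<and> norm_part X p (pv (meanH X) p) = 0)"

definition canonical_null_direction :: "(real \<times> real \<Rightarrow> real \<times> (real^'n)) \<Rightarrow> (real \<times> real) set \<Rightarrow> real \<times> (real^'n) \<Rightarrow> bool" where
  "canonical_null_direction X U Z \<longleftrightarrow> (\<forall>p\<in>U. lightlike (tang X p Z))"

end

theory Submission
  imports Defs
begin


lemma lor_inner: "lor a b = inner (- fst a, snd a) b"
  by (simp add: lor_def inner_prod_def)

lemma lor_comm: "lor a b = lor b a"
  by (simp add: lor_def inner_commute)
lemma lor_add_left[simp]: "lor (a + b) c = lor a c + lor b c"
  by (simp add: lor_def inner_add_left algebra_simps)
lemma lor_add_right[simp]: "lor c (a + b) = lor c a + lor c b"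
  by (simp add: lor_def inner_add_right algebra_simps)
lemma lor_diff_left[simp]: "lor (a - b) c = lor a c - lor b c"
  by (simp add: lor_def inner_diff_left algebra_simps)
lemma lor_diff_right[simp]: "lor c (a - b) = lor c a - lor c b"
  by (simp add: lor_def inner_diff_right algebra_simps)
lemma lor_scaleR_left[simp]: "lor (r *\<^sub>R a) c = r * lor a c"
  by (simp add: lor_def algebra_simps)
lemma lor_scaleR_right[simp]: "lor c (r *\<^sub>R a) = r * lor c a"
  by (simp add: lor_def algebra_simps)
lemma lor_zero_left[simp]: "lor 0 c = 0" by (simp add: lor_def)
lemma lor_zero_right[simp]: "lor c 0 = 0" by (simp add: lor_def)

lemma lor_has_derivative:
  assumes "(f has_derivative f') (at p)" "(g has_derivative g') (at p)"
  shows "((\<lambda>q. lor (f q) (g q)) has_derivative (\<lambda>d. lor (f' d) (g p) + lor (f p) (g' d))) (at p)"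
proof -
  have l: "bounded_linear (\<lambda>a::real \<times> (real^'n). (- fst a, snd a))"
    by (intro bounded_linear_Pair bounded_linear_minus bounded_linear_fst bounded_linear_snd)
  have "((\<lambda>q. (- fst (f q), snd (f q))) has_derivative (\<lambda>d. (- fst (f' d), snd (f' d)))) (at p)"
    using bounded_linear.has_derivative[OF l assms(1)] by simp
  from has_derivative_inner[OF this assms(2)] show ?thesis
    by (simp add: lor_inner algebra_simps)
qed

lemma lor_differentiable[derivative_intros]:
  "f differentiable (at p) \<Longrightarrow> g differentiable (at p) \<Longrightarrow> (\<lambda>q. lor (f q) (g q)) differentiable (at p)"
  unfolding differentiable_def using lor_has_derivative by blast

lemma fd_lor:
  assumes "f differentiable (at p)" "g differentiable (at p)"
  shows "frechet_derivative (\<lambda>q. lor (f q) (g q)) (at p) d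
     = lor (frechet_derivative f (at p) d) (g p) + lor (f p) (frechet_derivative g (at p) d)"
proof -
  have "((\<lambda>q. lor (f q) (g q)) has_derivative (\<lambda>d. lor (frechet_derivative f (at p) d) (g p) + lor (f p) (frechet_derivative g (at p) d))) (at p)"
    using lor_has_derivative assms frechet_derivative_works by blast
  from frechet_derivative_at[OF this] show ?thesis by metis
qed

lemma fd_eq_open:
  assumes "f differentiable (at p)" "open U" "p \<in> U" "\<And>q. q \<in> U \<Longrightarrow> f q = g q"
  shows "frechet_derivative f (at p) = frechet_derivative g (at p)"
  using frechet_derivative_transform_within_open assms by blast

lemma fd_zero_open:
  assumes "open U" "p \<in> U" "\<And>q. q \<in> U \<Longrightarrow> f q = 0"
  shows "frechet_derivative f (at p) d = 0"
proof -
  have "frechet_derivative (\<lambda>q. 0::'b::real_normed_vector) (at p) = frechet_derivative f (at p)"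
    by (rule fd_eq_open[OF _ assms(1,2)]) (auto simp: assms(3))
  then show ?thesis by (metis frechet_derivative_const)
qed


lemma r1: fixes E F G a b :: real
  assumes "E*G - F^2 \<noteq> 0"
  shows "(G/(E*G - F^2)*a - F/(E*G - F^2)*b)*E + (-F/(E*G - F^2)*a + E/(E*G - F^2)*b)*F = a"
proof -
  have "(G/(E*G - F^2)*a - F/(E*G - F^2)*b)*E + (-F/(E*G - F^2)*a + E/(E*G - F^2)*b)*F
      = a * ((E*G - F^2)/(E*G - F^2))" by (simp add: field_simps power2_eq_square)
  then show ?thesis using assms by simp
qed
lemma r2: fixes E F G a b :: real
  assumes "E*G - F^2 \<noteq> 0"
  shows "(G/(E*G - F^2)*a - F/(E*G - F^2)*b)*F + (-F/(E*G - F^2)*a + E/(E*G - F^2)*b)*G = b"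
proof -
  have "(G/(E*G - F^2)*a - F/(E*G - F^2)*b)*F + (-F/(E*G - F^2)*a + E/(E*G - F^2)*b)*G
      = b * ((E*G - F^2)/(E*G - F^2))" by (simp add: field_simps power2_eq_square)
  then show ?thesis using assms by simp
qed
lemma alg:
  fixes E F G t1 t2 m11 m12 m22 :: real
  assumes "(t1, t2) \<noteq> (0,0)" "E*t1^2 + 2*F*t1*t2 + G*t2^2 = 0"
    "t1*m11 + t2*m12 = 0" "t1*m12 + t2*m22 = 0"
  shows "G*m11 - 2*F*m12 + E*m22 = 0"
proof -
  have e1: "t1*m11 = - t2*m12" "t1*m12 = - t2*m22" using assms(3,4) by linarith+
  have c1: "t1^2*m11 = t2^2*m22"
  proof -
    have "t1^2*m11 = t1*(t1*m11)" by (simp add: power2_eq_square)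
    also have "\<dots> = - t2*(t1*m12)" using e1(1) by simp
    also have "\<dots> = t2^2*m22" using e1(2) by (simp add: power2_eq_square)
    finally show ?thesis .
  qed
  have c2: "t1^2*m12 = - t1*t2*m22"
  proof -
    have "t1^2*m12 = t1*(t1*m12)" by (simp add: power2_eq_square)
    also have "\<dots> = t1*(- t2*m22)" using e1(2) by simp
    finally show ?thesis by simp
  qed
  have c3: "t2^2*m12 = - t1*t2*m11"
  proof -
    have "t2^2*m12 = t2*(t2*m12)" by (simp add: power2_eq_square)
    also have "\<dots> = t2*(- t1*m11)" using e1(1) by simp
    finally show ?thesis by simp
  qed
  have a: "t1^2 * (G*m11 - 2*F*m12 + E*m22) = m22 * (E*t1^2 + 2*F*t1*t2 + G*t2^2)"
  proof -
    have "t1^2 * (G*m11 - 2*F*m12 + E*m22) = G*(t1^2*m11) - 2*F*(t1^2*m12) + E*t1^2*m22"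
      by (simp add: algebra_simps)
    also have "\<dots> = G*(t2^2*m22) - 2*F*(- t1*t2*m22) + E*t1^2*m22" using c1 c2 by simp
    finally show ?thesis by (simp add: algebra_simps)
  qed
  have b: "t2^2 * (G*m11 - 2*F*m12 + E*m22) = m11 * (E*t1^2 + 2*F*t1*t2 + G*t2^2)"
  proof -
    have "t2^2 * (G*m11 - 2*F*m12 + E*m22) = G*t2^2*m11 - 2*F*(t2^2*m12) + E*(t2^2*m22)"
      by (simp add: algebra_simps)
    also have "\<dots> = G*t2^2*m11 - 2*F*(- t1*t2*m11) + E*(t1^2*m11)" using c1 c3 by simp
    finally show ?thesis by (simp add: algebra_simps)
  qed
  show ?thesis using a b assms(1,2) by auto
qed


lemma tang_eq: "tang X p w =
   (gG X p / gdet X p * lor w (pu X p) - gF X p / gdet X p * lor w (pv X p)) *\<^sub>R pu X p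
 + (- gF X p / gdet X p * lor w (pu X p) + gE X p / gdet X p * lor w (pv X p)) *\<^sub>R pv X p"
  by (simp add: tang_def Let_def)

lemma tang_u:
  assumes "gdet X p \<noteq> 0"
  shows "lor (tang X p w) (pu X p) = lor w (pu X p)"
proof -
  have "lor (tang X p w) (pu X p) =
   (gG X p / gdet X p * lor w (pu X p) - gF X p / gdet X p * lor w (pv X p)) * gE X p
 + (- gF X p / gdet X p * lor w (pu X p) + gE X p / gdet X p * lor w (pv X p)) * gF X p"
    by (simp add: tang_eq gE_def gF_def lor_comm[of "pv X p"])
  also have "\<dots> = lor w (pu X p)" using assms
    r1[of "gE X p" "gG X p" "gF X p" "lor w (pu X p)" "lor w (pv X p)"]
    by (simp add: gdet_def)
  finally show ?thesis .
qed

lemma tang_v: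
  assumes "gdet X p \<noteq> 0"
  shows "lor (tang X p w) (pv X p) = lor w (pv X p)"
proof -
  have "lor (tang X p w) (pv X p) =
   (gG X p / gdet X p * lor w (pu X p) - gF X p / gdet X p * lor w (pv X p)) * gF X p
 + (- gF X p / gdet X p * lor w (pu X p) + gE X p / gdet X p * lor w (pv X p)) * gG X p"
    by (simp add: tang_eq gG_def gF_def)
  also have "\<dots> = lor w (pv X p)" using assms
    r2[of "gE X p" "gG X p" "gF X p" "lor w (pu X p)" "lor w (pv X p)"]
    by (simp add: gdet_def)
  finally show ?thesis .
qed

lemma norm_u: "gdet X p \<noteq> 0 \<Longrightarrow> lor (norm_part X p w) (pu X p) = 0"
  by (simp add: norm_part_def tang_u)
lemma norm_v: "gdet X p \<noteq> 0 \<Longrightarrow> lor (norm_part X p w) (pv X p) = 0"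
  by (simp add: norm_part_def tang_v)

lemma tang_sym: "lor (tang X p w) z = lor w (tang X p z)"
  by (simp add: tang_eq algebra_simps lor_comm[of z])

lemma perp_tang:
  assumes "lor h (pu X p) = 0" "lor h (pv X p) = 0"
  shows "lor h (tang X p w) = 0"
  using assms by (simp add: tang_eq)

lemma rev_cs:
  fixes e w :: "real \<times> (real^'n)"
  assumes "lor e e < 0" "lor w e = 0" "lor w w = 0"
  shows "w = 0"
proof -
  obtain e0 eb where e: "e = (e0, eb)" by (cases e)
  obtain w0 wb where w: "w = (w0, wb)" by (cases w)
  have 1: "eb \<bullet> eb < e0^2" using assms(1) by (simp add: e lor_def power2_eq_square)
  have 2: "w0 * e0 = wb \<bullet> eb" using assms(2) by (simp add: e w lor_def)
  have 3: "wb \<bullet> wb = w0^2" using assms(3) by (simp add: w lor_def power2_eq_square)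
  have cs: "(wb \<bullet> eb)^2 \<le> (wb \<bullet> wb) * (eb \<bullet> eb)"
    by (metis Cauchy_Schwarz_ineq)
  have "w0 = 0"
  proof (rule ccontr)
    assume "w0 \<noteq> 0"
    then have "w0^2 > 0" by simp
    have "w0^2*e0^2 = (wb \<bullet> eb)^2" using 2 by (metis power_mult_distrib)
    then have "w0^2 * e0^2 \<le> w0^2 * (eb \<bullet> eb)" using cs 3 by simp
    moreover have "w0^2 * (eb \<bullet> eb) < w0^2 * e0^2" using 1 \<open>w0^2 > 0\<close> by simp
    ultimately show False by simp
  qed
  then show ?thesis using 3 by (simp add: w zero_prod_def)
qed

lemma timelike_exists:
  fixes u v :: "real \<times> (real^'n)"
  assumes "lor u u * lor v v - (lor u v)^2 < 0"
  shows "\<exists>a b. lor (a *\<^sub>R u + b *\<^sub>R v) (a *\<^sub>R u + b *\<^sub>R v) < 0"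
proof -
  define E F G where "E = lor u u" "F = lor u v" "G = lor v v"
  have q: "\<And>a b. lor (a *\<^sub>R u + b *\<^sub>R v) (a *\<^sub>R u + b *\<^sub>R v) = a*a*E + 2*a*b*F + b*b*G"
    by (simp add: E_F_G_def lor_comm[of v u] algebra_simps)
  have D: "E*G - F^2 < 0" using assms by (simp add: E_F_G_def)
  show ?thesis
  proof (cases "G = 0")
    case True
    then have "F \<noteq> 0" using D by auto
    then have "1*1*E + 2*1*(-(E+1)/(2*F))*F + (-(E+1)/(2*F))*(-(E+1)/(2*F))*G < 0"
      using True by (simp add: field_simps)
    then show ?thesis using q by metis
  next
    case False
    have "G*G*E + 2*G*(-F)*F + (-F)*(-F)*G = G*(E*G - F^2)" by (simp add: algebra_simps power2_eq_square)
    show ?thesis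
    proof (cases "G < 0")
      case True
      then have "0*0*E + 2*0*1*F + 1*1*G < 0" by simp
      then show ?thesis using q by metis
    next
      case False2: False
      with False have "G > 0" by simp
      then have "G*G*E + 2*G*(-F)*F + (-F)*(-F)*G < 0" using D
        by (simp add: algebra_simps power2_eq_square)
      then show ?thesis using q by metis
    qed
  qed
qed

lemma normal_null_zero:
  fixes u v h :: "real \<times> (real^'n)"
  assumes "lor u u * lor v v - (lor u v)^2 < 0" "lor h u = 0" "lor h v = 0" "lor h h = 0"
  shows "h = 0"
proof -
  obtain a b where ab: "lor (a *\<^sub>R u + b *\<^sub>R v) (a *\<^sub>R u + b *\<^sub>R v) < 0"
    using timelike_exists[OF assms(1)] by blast
  have "lor h (a *\<^sub>R u + b *\<^sub>R v) = 0" using assms(2,3) by simp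
  then show ?thesis using rev_cs[OF ab _ assms(4)] by blast
qed



lemma pu_deriv:
  fixes g :: "real \<times> real \<Rightarrow> real"
  assumes "g differentiable (at (x,y))"
  shows "((\<lambda>s. g (s,y)) has_real_derivative pu g (x,y)) (at x)"
proof -
  let ?G = "frechet_derivative g (at (x,y))"
  have G: "(g has_derivative ?G) (at (x,y))" using assms frechet_derivative_works by blast
  have lin: "linear ?G" using assms linear_frechet_derivative by blast
  have P: "((\<lambda>s. (s,y)) has_derivative (\<lambda>t. (t,0))) (at x)"
    by (auto intro!: derivative_eq_intros)
  have "((\<lambda>s. g (s,y)) has_derivative (\<lambda>t. ?G (t,0))) (at x)"
    using diff_chain_at[OF P, of g ?G] G by (simp add: o_def)
  moreover have "\<And>t. ?G (t,0) = t * pu g (x,y)"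
  proof -
    fix t :: real
    have "?G (t,0) = ?G (t *\<^sub>R (1,0))" by simp
    also have "\<dots> = t *\<^sub>R ?G (1,0)" using linear.scaleR[OF lin] by blast
    finally show "?G (t,0) = t * pu g (x,y)" by (simp add: pu_def)
  qed
  moreover have "(\<lambda>t. t * c) = (*) c" for c :: real by (auto simp: fun_eq_iff)
  ultimately show ?thesis by (simp add: has_field_derivative_def)
qed

lemma pv_deriv:
  fixes g :: "real \<times> real \<Rightarrow> real"
  assumes "g differentiable (at (x,y))"
  shows "((\<lambda>t. g (x,t)) has_real_derivative pv g (x,y)) (at y)"
proof -
  let ?G = "frechet_derivative g (at (x,y))"
  have G: "(g has_derivative ?G) (at (x,y))" using assms frechet_derivative_works by blast
  have lin: "linear ?G" using assms linear_frechet_derivative by blast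
  have P: "((\<lambda>t. (x,t)) has_derivative (\<lambda>t. (0,t))) (at y)"
    by (auto intro!: derivative_eq_intros)
  have "((\<lambda>t. g (x,t)) has_derivative (\<lambda>t. ?G (0,t))) (at y)"
    using diff_chain_at[OF P, of g ?G] G by (simp add: o_def)
  moreover have "\<And>t. ?G (0,t) = t * pv g (x,y)"
  proof -
    fix t :: real
    have "?G (0,t) = ?G (t *\<^sub>R (0,1))" by simp
    also have "\<dots> = t *\<^sub>R ?G (0,1)" using linear.scaleR[OF lin] by blast
    finally show "?G (0,t) = t * pv g (x,y)" by (simp add: pv_def)
  qed
  moreover have "(\<lambda>t. t * c) = (*) c" for c :: real by (auto simp: fun_eq_iff)
  ultimately show ?thesis by (simp add: has_field_derivative_def)
qed

lemma mvt_helper: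
  fixes f f' :: "real \<Rightarrow> real"
  assumes "a < b" "\<And>s. a \<le> s \<Longrightarrow> s \<le> b \<Longrightarrow> (f has_real_derivative f' s) (at s)"
  shows "\<exists>z. a < z \<and> z < b \<and> f b - f a = (b - a) * f' z"
proof -
  have "continuous_on {a..b} f"
    using assms(2) by (auto intro!: continuous_at_imp_continuous_on DERIV_isCont)
  moreover have "\<And>x. a < x \<Longrightarrow> x < b \<Longrightarrow> f differentiable (at x)"
    using assms(2) real_differentiable_def
    by (metis dual_order.strict_implies_order has_field_derivative_imp_has_derivative differentiableI)
  ultimately obtain l z where "a < z" "z < b" "(f has_real_derivative l) (at z)" "f b - f a = (b - a) * l"
    using MVT[OF assms(1)] by blast
  moreover have "l = f' z" using assms(2) DERIV_unique calculation by (meson less_imp_le)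
  ultimately show ?thesis by blast
qed

lemma schwarz_real:
  fixes g :: "real \<times> real \<Rightarrow> real"
  assumes U: "open U" "p \<in> U"
    and dg: "\<And>q. q\<in>U \<Longrightarrow> g differentiable (at q)"
    and du: "\<And>q. q\<in>U \<Longrightarrow> pu g differentiable (at q)"
    and dv: "\<And>q. q\<in>U \<Longrightarrow> pv g differentiable (at q)"
    and c1: "continuous_on U (pv (pu g))" and c2: "continuous_on U (pu (pv g))"
  shows "pv (pu g) p = pu (pv g) p"
proof (rule ccontr)
  assume ne: "pv (pu g) p \<noteq> pu (pv g) p"
  obtain x0 y0 where p: "p = (x0,y0)" by (cases p)
  define A where "A = pv (pu g) p"
  define B where "B = pu (pv g) p"
  define e where "e = \<bar>A - B\<bar> / 2"
  have e: "e > 0" using ne by (simp add: e_def A_def B_def)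
  have ca: "continuous (at p) (pv (pu g))" using c1 U continuous_on_eq_continuous_at by blast
  have cb: "continuous (at p) (pu (pv g))" using c2 U continuous_on_eq_continuous_at by blast
  obtain d1 where d1: "d1 > 0" "\<And>q. dist q p < d1 \<Longrightarrow> dist (pv (pu g) q) A < e"
    using ca e unfolding continuous_at_eps_delta A_def by blast
  obtain d2 where d2: "d2 > 0" "\<And>q. dist q p < d2 \<Longrightarrow> dist (pu (pv g) q) B < e"
    using cb e unfolding continuous_at_eps_delta B_def by blast
  obtain d3 where d3: "d3 > 0" "ball p d3 \<subseteq> U" using U open_contains_ball by blast
  define h where "h = min d1 (min d2 d3) / 3"
  have h: "h > 0" using d1 d2 d3 by (simp add: h_def)
  have sq: "(x0+s, y0+t) \<in> U \<and> dist (pv (pu g) (x0+s, y0+t)) A < e \<and> dist (pu (pv g) (x0+s, y0+t)) B < e"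
    if "0 \<le> s" "s \<le> h" "0 \<le> t" "t \<le> h" for s t
  proof -
    have "dist (x0+s, y0+t) p \<le> dist (x0+s) x0 + dist (y0+t) y0"
      unfolding p dist_Pair_Pair
      by (rule real_le_lsqrt) (auto simp: power2_eq_square algebra_simps)
    also have "\<dots> \<le> 2*h" using that by (simp add: dist_real_def)
    also have "\<dots> < min d1 (min d2 d3)" using h d1 d2 d3 unfolding h_def by linarith
    finally have "dist (x0+s, y0+t) p < min d1 (min d2 d3)" .
    then show ?thesis using d1 d2 d3 by (auto simp: dist_commute subset_iff)
  qed
  define \<Delta> where "\<Delta> = g (x0+h, y0+h) - g (x0+h, y0) - g (x0, y0+h) + g (x0, y0)"
  obtain a1 where a1: "\<Delta> = h * (h * a1)" "dist a1 A < e"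
  proof -
    have "\<exists>z. x0 < z \<and> z < x0 + h \<and> (g (x0+h, y0+h) - g (x0+h, y0)) - (g (x0, y0+h) - g (x0, y0))
            = (x0 + h - x0) * (pu g (z, y0+h) - pu g (z, y0))"
    proof (rule mvt_helper[of x0 "x0+h" "\<lambda>s. g (s, y0+h) - g (s, y0)"])
      show "x0 < x0 + h" using h by simp
      fix s assume "x0 \<le> s" "s \<le> x0 + h"
      then have "(s, y0+h) \<in> U" "(s, y0) \<in> U" using sq[of "s - x0" h] sq[of "s - x0" 0] h by auto
      then show "((\<lambda>s. g (s, y0 + h) - g (s, y0)) has_real_derivative pu g (s, y0 + h) - pu g (s, y0)) (at s)"
        by (intro derivative_intros pu_deriv dg)
    qed
    then obtain z where z: "x0 < z" "z < x0 + h" "\<Delta> = h * (pu g (z, y0+h) - pu g (z, y0))"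
      by (auto simp: \<Delta>_def algebra_simps)
    have "\<exists>w. y0 < w \<and> w < y0 + h \<and> pu g (z, y0+h) - pu g (z, y0) = (y0 + h - y0) * pv (pu g) (z, w)"
    proof (rule mvt_helper[of y0 "y0+h" "\<lambda>t. pu g (z, t)"])
      show "y0 < y0 + h" using h by simp
      fix t assume "y0 \<le> t" "t \<le> y0 + h"
      then have "(z, t) \<in> U" using sq[of "z - x0" "t - y0"] z by auto
      then show "((\<lambda>t. pu g (z, t)) has_real_derivative pv (pu g) (z, t)) (at t)"
        by (intro pv_deriv du)
    qed
    then obtain w where w: "y0 < w" "w < y0 + h" "pu g (z, y0+h) - pu g (z, y0) = h * pv (pu g) (z, w)"
      by auto
    have "dist (pv (pu g) (z, w)) A < e" using sq[of "z - x0" "w - y0"] z w by auto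
    then show ?thesis using that z w by auto
  qed
  obtain b1 where b1: "\<Delta> = h * (h * b1)" "dist b1 B < e"
  proof -
    have "\<exists>z. y0 < z \<and> z < y0 + h \<and> (g (x0+h, y0+h) - g (x0, y0+h)) - (g (x0+h, y0) - g (x0, y0))
            = (y0 + h - y0) * (pv g (x0+h, z) - pv g (x0, z))"
    proof (rule mvt_helper[of y0 "y0+h" "\<lambda>t. g (x0+h, t) - g (x0, t)"])
      show "y0 < y0 + h" using h by simp
      fix t assume "y0 \<le> t" "t \<le> y0 + h"
      then have "(x0+h, t) \<in> U" "(x0, t) \<in> U" using sq[of h "t - y0"] sq[of 0 "t - y0"] h by auto
      then show "((\<lambda>t. g (x0+h, t) - g (x0, t)) has_real_derivative pv g (x0+h, t) - pv g (x0, t)) (at t)"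
        by (intro derivative_intros pv_deriv dg)
    qed
    then obtain z where z: "y0 < z" "z < y0 + h" "\<Delta> = h * (pv g (x0+h, z) - pv g (x0, z))"
      by (auto simp: \<Delta>_def algebra_simps)
    have "\<exists>w. x0 < w \<and> w < x0 + h \<and> pv g (x0+h, z) - pv g (x0, z) = (x0 + h - x0) * pu (pv g) (w, z)"
    proof (rule mvt_helper[of x0 "x0+h" "\<lambda>s. pv g (s, z)"])
      show "x0 < x0 + h" using h by simp
      fix s assume "x0 \<le> s" "s \<le> x0 + h"
      then have "(s, z) \<in> U" using sq[of "s - x0" "z - y0"] z by auto
      then show "((\<lambda>s. pv g (s, z)) has_real_derivative pu (pv g) (s, z)) (at s)"
        by (intro pu_deriv dv)
    qed
    then obtain w where w: "x0 < w" "w < x0 + h" "pv g (x0+h, z) - pv g (x0, z) = h * pu (pv g) (w, z)"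
      by auto
    have "dist (pu (pv g) (w, z)) B < e" using sq[of "w - x0" "z - y0"] z w by auto
    then show ?thesis using that z w by auto
  qed
  have "a1 = b1" using a1(1) b1(1) h by simp
  then have "\<bar>A - B\<bar> < 2*e" using a1(2) b1(2) by (simp add: dist_real_def)
  then show False by (simp add: e_def)
qed

lemma fd_inner_left:
  assumes "f differentiable (at q)"
  shows "frechet_derivative (\<lambda>q. inner (f q) b) (at q) d = inner (frechet_derivative f (at q) d) b"
proof -
  have "((\<lambda>q. inner (f q) b) has_derivative (\<lambda>d. inner (frechet_derivative f (at q) d) b)) (at q)"
    using bounded_linear.has_derivative[OF bounded_linear_inner_left] assms frechet_derivative_works by blast
  from frechet_derivative_at[OF this] show ?thesis by metis
qed

lemma differentiable_transform_open:
  assumes "f differentiable (at p)" "open U" "p \<in> U" "\<And>q. q \<in> U \<Longrightarrow> f q = g q"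
  shows "g differentiable (at p)"
  using assms has_derivative_transform_within_open unfolding differentiable_def by blast

lemma schwarz:
  fixes f :: "real \<times> real \<Rightarrow> 'a::euclidean_space"
  assumes U: "open U" "p \<in> U"
    and df: "\<And>q. q\<in>U \<Longrightarrow> f differentiable (at q)"
    and du: "\<And>q. q\<in>U \<Longrightarrow> pu f differentiable (at q)"
    and dv: "\<And>q. q\<in>U \<Longrightarrow> pv f differentiable (at q)"
    and c1: "continuous_on U (pv (pu f))" and c2: "continuous_on U (pu (pv f))"
  shows "pv (pu f) p = pu (pv f) p"
proof (rule euclidean_eqI)
  fix b :: 'a assume "b \<in> Basis"
  define g where "g = (\<lambda>q. inner (f q) b)"
  have dg: "g differentiable (at q)" if "q \<in> U" for q
    unfolding g_def using df[OF that] by (intro differentiable_inner differentiable_const)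
  have pug: "pu g q = inner (pu f q) b" if "q \<in> U" for q
    unfolding g_def pu_def using fd_inner_left df[OF that] by blast
  have pvg: "pv g q = inner (pv f q) b" if "q \<in> U" for q
    unfolding g_def pv_def using fd_inner_left df[OF that] by blast
  have dug: "pu g differentiable (at q)" if "q \<in> U" for q
    by (rule differentiable_transform_open[of "\<lambda>q. inner (pu f q) b" q U])
       (use du[OF that] U that pug in auto)
  have dvg: "pv g differentiable (at q)" if "q \<in> U" for q
    by (rule differentiable_transform_open[of "\<lambda>q. inner (pv f q) b" q U])
       (use dv[OF that] U that pvg in auto)
  have puvg: "pv (pu g) q = inner (pv (pu f) q) b" if "q \<in> U" for q
  proof -
    have "pv (pu g) q = pv (\<lambda>q. inner (pu f q) b) q"
      unfolding pv_def
      using fd_eq_open[of "\<lambda>q. inner (pu f q) b" q U "pu g"] du[OF that] U that pug by auto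
    also have "\<dots> = inner (pv (pu f) q) b"
      unfolding pv_def using fd_inner_left du[OF that] by blast
    finally show ?thesis .
  qed
  have pvug: "pu (pv g) q = inner (pu (pv f) q) b" if "q \<in> U" for q
  proof -
    have "pu (pv g) q = pu (\<lambda>q. inner (pv f q) b) q"
      unfolding pu_def
      using fd_eq_open[of "\<lambda>q. inner (pv f q) b" q U "pv g"] dv[OF that] U that pvg by auto
    also have "\<dots> = inner (pu (pv f) q) b"
      unfolding pu_def using fd_inner_left dv[OF that] by blast
    finally show ?thesis .
  qed
  have cc1: "continuous_on U (pv (pu g))"
    using continuous_on_cong[OF refl, of U "pv (pu g)" "\<lambda>q. inner (pv (pu f) q) b"] puvg
      c1 continuous_on_inner continuous_on_const by fastforce
  have cc2: "continuous_on U (pu (pv g))"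
    using continuous_on_cong[OF refl, of U "pu (pv g)" "\<lambda>q. inner (pu (pv f) q) b"] pvug
      c2 continuous_on_inner continuous_on_const by fastforce
  have "pv (pu g) p = pu (pv g) p"
    by (rule schwarz_real[OF U dg dug dvg cc1 cc2])
  then show "inner (pv (pu f) p) b = inner (pu (pv f) p) b"
    using puvg pvug U by simp
qed



lemma deriv_ident:
  assumes "f1 differentiable (at p)" "g1 differentiable (at p)" "f2 differentiable (at p)"
    "g2 differentiable (at p)" "open U" "p \<in> U" "\<And>q. q \<in> U \<Longrightarrow> lor (f1 q) (g1 q) = lor (f2 q) (g2 q)"
  shows "lor (frechet_derivative f1 (at p) d) (g1 p) + lor (f1 p) (frechet_derivative g1 (at p) d)
       = lor (frechet_derivative f2 (at p) d) (g2 p) + lor (f2 p) (frechet_derivative g2 (at p) d)"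
proof -
  have "frechet_derivative (\<lambda>q. lor (f1 q) (g1 q)) (at p) = frechet_derivative (\<lambda>q. lor (f2 q) (g2 q)) (at p)"
    by (rule fd_eq_open[OF _ assms(5,6)]) (use assms in \<open>auto intro: lor_differentiable\<close>)
  then show ?thesis using fd_lor[OF assms(1,2), of d] fd_lor[OF assms(3,4), of d] by metis
qed

lemma deriv_zero:
  assumes "f1 differentiable (at p)" "g1 differentiable (at p)" "open U" "p \<in> U"
    "\<And>q. q \<in> U \<Longrightarrow> lor (f1 q) (g1 q) = 0"
  shows "lor (frechet_derivative f1 (at p) d) (g1 p) + lor (f1 p) (frechet_derivative g1 (at p) d) = 0"
  using fd_zero_open[OF assms(3,4), of "\<lambda>q. lor (f1 q) (g1 q)" d] assms(5) fd_lor[OF assms(1,2), of d]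
  by metis

lemma meanH_lor:
  assumes "gdet X p \<noteq> 0" "pv (pu X) p = pu (pv X) p"
    and "\<And>w. lor (norm_part X p w) V = lor w W"
  shows "lor (meanH X p) V = (gG X p * lor (pu (pu X) p) W - 2 * gF X p * lor (pv (pu X) p) W
           + gE X p * lor (pv (pv X) p) W) / (2 * gdet X p)"
  using assms(1) by (simp add: meanH_def Let_def assms(2,3) field_simps)

lemma meanH_perp_u: "gdet X p \<noteq> 0 \<Longrightarrow> lor (meanH X p) (pu X p) = 0"
  by (simp add: meanH_def Let_def norm_u)
lemma meanH_perp_v: "gdet X p \<noteq> 0 \<Longrightarrow> lor (meanH X p) (pv X p) = 0"
  by (simp add: meanH_def Let_def norm_v)

lemma smooth_facts:
  assumes "timelike_surface X U" "q \<in> U"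
  shows "X differentiable (at q)" "pu X differentiable (at q)" "pv X differentiable (at q)"
    "pu (pu X) differentiable (at q)" "pv (pu X) differentiable (at q)"
    "pu (pv X) differentiable (at q)" "pv (pv X) differentiable (at q)"
    "continuous_on U (pv (pu X))" "continuous_on U (pu (pv X))"
    "open U" "gdet X q < 0"
proof -
  have o: "open U" and sm: "smooth_on X U" and g: "gdet X q < 0"
    using assms unfolding timelike_surface_def by auto
  have "Ck (Suc (Suc (Suc 0))) X U" using sm smooth_on_def by blast
  then have c: "X differentiable_on U" "pu X differentiable_on U" "pv X differentiable_on U"
    "pu (pu X) differentiable_on U" "pv (pu X) differentiable_on U"
    "pu (pv X) differentiable_on U" "pv (pv X) differentiable_on U"
    "continuous_on U (pv (pu X))" "continuous_on U (pu (pv X))"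
    by auto
  show "X differentiable (at q)" "pu X differentiable (at q)" "pv X differentiable (at q)"
    "pu (pu X) differentiable (at q)" "pv (pu X) differentiable (at q)"
    "pu (pv X) differentiable (at q)" "pv (pv X) differentiable (at q)"
    using c(1-7) o assms(2) differentiable_on_eq_differentiable_at by blast+
  show "continuous_on U (pv (pu X))" "continuous_on U (pu (pv X))" "open U" "gdet X q < 0"
    using c o g by auto
qed

lemma sym_X:
  assumes "timelike_surface X U" "p \<in> U"
  shows "pv (pu X) p = pu (pv X) p"
  by (rule schwarz[of U]) (use smooth_facts[OF assms(1)] assms(2) in auto)

lemma tang_differentiable:
  assumes "timelike_surface X U" "p \<in> U"
  shows "(\<lambda>q. tang X q Z) differentiable (at p)"
proof -
  note sf = smooth_facts[OF assms]
  have "gE X p * gG X p - (gF X p)^2 \<noteq> 0" using sf(11) by (simp add: gdet_def)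
  then show ?thesis unfolding tang_eq gdet_def gE_def gF_def gG_def
    by (intro derivative_intros lor_differentiable sf(2,3) differentiable_const) auto
qed

lemma meanH_differentiable:
  assumes "timelike_surface X U" "p \<in> U"
  shows "meanH X differentiable (at p)"
proof -
  note sf = smooth_facts[OF assms]
  have "gE X p * gG X p - (gF X p)^2 \<noteq> 0" using sf(11) by (simp add: gdet_def)
  then show ?thesis unfolding meanH_def Let_def norm_part_def tang_eq gdet_def gE_def gF_def gG_def
    by (intro derivative_intros lor_differentiable sf(2-7) differentiable_const) auto
qed



lemma T_coords:
  "\<exists>t1 t2. tang X p Z = t1 *\<^sub>R pu X p + t2 *\<^sub>R pv X p"
  by (metis tang_eq)

lemma lor_comb: "lor (t1 *\<^sub>R u + t2 *\<^sub>R v) (t1 *\<^sub>R u + t2 *\<^sub>R v) = lor u u * t1^2 + 2 * lor u v * t1 * t2 + lor v v * t2^2"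
  by (simp add: lor_comm[of v u] algebra_simps power2_eq_square)

lemma step1:
  assumes ts: "timelike_surface X U" and cn: "canonical_null_direction X U Z" and p: "p \<in> U"
  shows "lor (meanH X p) Z = 0"
proof -
  note sf = smooth_facts[OF ts p]
  have gd: "gdet X p \<noteq> 0" using sf(11) by simp
  have gdq: "\<And>q. q \<in> U \<Longrightarrow> gdet X q \<noteq> 0" using smooth_facts(11)[OF ts] by force
  define T where "T = (\<lambda>q. tang X q Z)"
  have dT: "T differentiable (at p)" unfolding T_def by (rule tang_differentiable[OF ts p])
  have ll: "lightlike (T p)" using cn p by (simp add: canonical_null_direction_def T_def)
  obtain t1 t2 where tc: "T p = t1 *\<^sub>R pu X p + t2 *\<^sub>R pv X p" using T_coords unfolding T_def by blast
  define N where "N = Z - T p"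
  have kern: "t1 * lor N (frechet_derivative (pu X) (at p) d) + t2 * lor N (frechet_derivative (pv X) (at p) d) = 0" for d
  proof -
    let ?DT = "frechet_derivative T (at p) d"
    have e1: "lor ?DT (pu X p) + lor (T p) (frechet_derivative (pu X) (at p) d)
            = lor (frechet_derivative (\<lambda>q. Z) (at p) d) (pu X p) + lor Z (frechet_derivative (pu X) (at p) d)"
      by (rule deriv_ident[OF dT sf(2) _ sf(2) sf(10) p]) (auto simp: T_def tang_u gdq)
    have e2: "lor ?DT (pv X p) + lor (T p) (frechet_derivative (pv X) (at p) d)
            = lor (frechet_derivative (\<lambda>q. Z) (at p) d) (pv X p) + lor Z (frechet_derivative (pv X) (at p) d)"
      by (rule deriv_ident[OF dT sf(3) _ sf(3) sf(10) p]) (auto simp: T_def tang_v gdq)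
    have e3: "lor ?DT (T p) + lor (T p) ?DT = 0"
      by (rule deriv_zero[OF dT dT sf(10) p]) (use cn in \<open>auto simp: T_def canonical_null_direction_def lightlike_def\<close>)
    have "lor ?DT (T p) = 0" using e3 lor_comm[of ?DT "T p"] by simp
    then have z0: "t1 * lor ?DT (pu X p) + t2 * lor ?DT (pv X p) = 0" by (simp add: tc)
    have z: "frechet_derivative (\<lambda>q. Z) (at p) d = 0" by simp
    have s1: "lor ?DT (pu X p) = lor Z (frechet_derivative (pu X) (at p) d) - lor (T p) (frechet_derivative (pu X) (at p) d)"
      using e1 unfolding z lor_zero_left by linarith
    have s2: "lor ?DT (pv X p) = lor Z (frechet_derivative (pv X) (at p) d) - lor (T p) (frechet_derivative (pv X) (at p) d)"
      using e2 unfolding z lor_zero_left by linarith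
    have "t1 * lor N (frechet_derivative (pu X) (at p) d) + t2 * lor N (frechet_derivative (pv X) (at p) d)
       = t1 * (lor Z (frechet_derivative (pu X) (at p) d) - lor (T p) (frechet_derivative (pu X) (at p) d))
       + t2 * (lor Z (frechet_derivative (pv X) (at p) d) - lor (T p) (frechet_derivative (pv X) (at p) d))"
      by (simp only: N_def lor_diff_left)
    also have "\<dots> = 0" using z0 unfolding s1 s2 .
    finally show ?thesis .
  qed
  have k1: "t1 * lor N (pu (pu X) p) + t2 * lor N (pv (pu X) p) = 0"
    using kern[of "(1,0)"] sym_X[OF ts p] by (simp add: pu_def pv_def)
  have k2: "t1 * lor N (pv (pu X) p) + t2 * lor N (pv (pv X) p) = 0"
    using kern[of "(0,1)"] by (simp add: pv_def)
  have nz: "(t1, t2) \<noteq> (0, 0)" using ll tc by (auto simp: lightlike_def)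
  have nul: "gE X p * t1^2 + 2 * gF X p * t1 * t2 + gG X p * t2^2 = 0"
    using ll tc lor_comb[of t1 "pu X p" t2 "pv X p"] by (simp add: lightlike_def gE_def gF_def gG_def)
  have a: "gG X p * lor N (pu (pu X) p) - 2 * gF X p * lor N (pv (pu X) p) + gE X p * lor N (pv (pv X) p) = 0"
    by (rule alg[OF nz nul k1 k2])
  have "lor (meanH X p) Z = (gG X p * lor (pu (pu X) p) N - 2 * gF X p * lor (pv (pu X) p) N
           + gE X p * lor (pv (pv X) p) N) / (2 * gdet X p)"
    by (rule meanH_lor[OF gd sym_X[OF ts p]])
       (simp add: norm_part_def tang_sym N_def T_def)
  moreover have "lor (pu (pu X) p) N = lor N (pu (pu X) p)" "lor (pv (pu X) p) N = lor N (pv (pu X) p)"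
    "lor (pv (pv X) p) N = lor N (pv (pv X) p)" by (simp_all only: lor_comm)
  ultimately show ?thesis using a by simp
qed

lemma tang_lor_perp:
  assumes "lor h (pu X p) = 0" "lor h (pv X p) = 0"
  shows "lor (tang X p w) h = 0"
  using perp_tang[OF assms] lor_comm by metis

theorem mainTheorem7:
  fixes X :: "real \<times> real \<Rightarrow> real \<times> (real^'n)" and U :: "(real \<times> real) set"
    and Z :: "real \<times> (real^'n)"
  assumes "timelike_surface X U"
    and "canonical_null_direction X U Z"
    and "parallel_mean_curvature X U"
  shows "\<forall>p\<in>U. meanH X p = 0"
proof
  fix p assume p: "p \<in> U"
  note ts = assms(1) and cn = assms(2)
  note sf = smooth_facts[OF ts p]
  have gd: "gdet X p \<noteq> 0" using sf(11) by simp
  have gdq: "\<And>q. q \<in> U \<Longrightarrow> gdet X q \<noteq> 0" using smooth_facts(11)[OF ts] by force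
  define H where "H = meanH X"
  have dH: "H differentiable (at p)" unfolding H_def by (rule meanH_differentiable[OF ts p])
  define T where "T = tang X p Z"
  have ll: "lightlike T" using cn p by (simp add: canonical_null_direction_def T_def)
  obtain t1 t2 where tc: "T = t1 *\<^sub>R pu X p + t2 *\<^sub>R pv X p" using T_coords unfolding T_def by blast
  have kern: "t1 * lor (H p) (frechet_derivative (pu X) (at p) d) + t2 * lor (H p) (frechet_derivative (pv X) (at p) d) = 0"
    if par: "norm_part X p (frechet_derivative H (at p) d) = 0" for d
  proof -
    let ?DH = "frechet_derivative H (at p) d"
    have e1: "lor ?DH (pu X p) + lor (H p) (frechet_derivative (pu X) (at p) d) = 0"
      by (rule deriv_zero[OF dH sf(2) sf(10) p]) (auto simp: H_def meanH_perp_u gdq)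
    have e2: "lor ?DH (pv X p) + lor (H p) (frechet_derivative (pv X) (at p) d) = 0"
      by (rule deriv_zero[OF dH sf(3) sf(10) p]) (auto simp: H_def meanH_perp_v gdq)
    have e3: "lor ?DH Z + lor (H p) (frechet_derivative (\<lambda>q. Z) (at p) d) = 0"
      by (rule deriv_zero[OF dH _ sf(10) p]) (auto simp: H_def step1[OF ts cn])
    have "?DH = tang X p ?DH" using par by (simp add: norm_part_def)
    then have "lor ?DH Z = lor ?DH T" using tang_sym[of X p ?DH Z] T_def by metis
    then have z0: "t1 * lor ?DH (pu X p) + t2 * lor ?DH (pv X p) = 0" using e3 by (simp add: tc)
    have s1: "lor ?DH (pu X p) = - lor (H p) (frechet_derivative (pu X) (at p) d)"
      using e1 by linarith
    have s2: "lor ?DH (pv X p) = - lor (H p) (frechet_derivative (pv X) (at p) d)"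
      using e2 by linarith
    have "t1 * lor (H p) (frechet_derivative (pu X) (at p) d) + t2 * lor (H p) (frechet_derivative (pv X) (at p) d)
       = - (t1 * lor ?DH (pu X p) + t2 * lor ?DH (pv X p))" unfolding s1 s2 by simp
    then show ?thesis using z0 by simp
  qed
  have par: "norm_part X p (pu H p) = 0" "norm_part X p (pv H p) = 0"
    using assms(3) p by (auto simp: parallel_mean_curvature_def H_def)
  have k1: "t1 * lor (H p) (pu (pu X) p) + t2 * lor (H p) (pv (pu X) p) = 0"
    using kern[of "(1,0)"] par(1) sym_X[OF ts p] by (simp add: pu_def pv_def)
  have k2: "t1 * lor (H p) (pv (pu X) p) + t2 * lor (H p) (pv (pv X) p) = 0"
    using kern[of "(0,1)"] par(2) by (simp add: pv_def)
  have nz: "(t1, t2) \<noteq> (0, 0)" using ll tc by (auto simp: lightlike_def)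
  have nul: "gE X p * t1^2 + 2 * gF X p * t1 * t2 + gG X p * t2^2 = 0"
    using ll tc lor_comb[of t1 "pu X p" t2 "pv X p"] by (simp add: lightlike_def gE_def gF_def gG_def)
  have a: "gG X p * lor (H p) (pu (pu X) p) - 2 * gF X p * lor (H p) (pv (pu X) p) + gE X p * lor (H p) (pv (pv X) p) = 0"
    by (rule alg[OF nz nul k1 k2])
  have hu: "lor (H p) (pu X p) = 0" "lor (H p) (pv X p) = 0"
    using gd by (auto simp: H_def meanH_perp_u meanH_perp_v)
  have "lor (H p) (H p) = (gG X p * lor (pu (pu X) p) (H p) - 2 * gF X p * lor (pv (pu X) p) (H p)
           + gE X p * lor (pv (pv X) p) (H p)) / (2 * gdet X p)"
    unfolding H_def
    by (rule meanH_lor[OF gd sym_X[OF ts p]])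
       (simp add: norm_part_def tang_lor_perp hu[unfolded H_def])
  moreover have "lor (pu (pu X) p) (H p) = lor (H p) (pu (pu X) p)" "lor (pv (pu X) p) (H p) = lor (H p) (pv (pu X) p)"
    "lor (pv (pv X) p) (H p) = lor (H p) (pv (pv X) p)" by (simp_all only: lor_comm)
  ultimately have hh: "lor (H p) (H p) = 0" using a by simp
  have "H p = 0"
    by (rule normal_null_zero[OF _ hu hh]) (use sf(11) in \<open>simp add: gdet_def gE_def gF_def gG_def\<close>)
  then show "meanH X p = 0" by (simp add: H_def)
qed

end
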